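(* Let $F:\mathbb{R}^d\to\mathbb{R}^d$ be smooth and consider $\dot{x}=F(x)$. Let $\Psi:\mathbb{R}^d\times\mathbb{R}^d\to\mathbb{R}^d$ be smooth and satisfy the consistency conditions $$\Psi(x,x)=F(x),\qquad F'(x)=\Psi_1(x,x)+\Psi_2(x,x)\quad\text{for all }x.$$ Here $\Psi_1,\Psi_2$ are the $d\times d$ Jacobian matrices of $\Psi$ with respect to its first and second vector argument. Write $\bar\Psi_2=\Psi_2(\bar x,\bar x)$. Consider the scheme $x_{n+1}-x_n=\delta(\bar x)\,\Psi(x_n,x_{n+1})$ with $$\delta(\bar x)=\big(e^{h_nF'(\bar x)}-1\big)\Big(F'(\bar x)+\bar\Psi_2\big(e^{h_nF'(\bar x)}-1\big)\Big)^{-1}.$$ This scheme is locally exact at $\bar x$.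
   Context: $F'(x)$ denotes the Jacobian matrix of $F$, assumed invertible at $\bar x$, and $1$ denotes the identity matrix. The linearization of $\dot{x}=F(x)$ around $\bar x$ is $\dot\xi=F'(\bar x)\xi+F(\bar x)$ with $\xi=x-\bar x$. Its exact discretization with time step $h_n$ is $$\xi_{n+1}=e^{h_nF'(\bar x)}\xi_n+\big(e^{h_nF'(\bar x)}-1\big)F'(\bar x)^{-1}F(\bar x).$$ The linearization of the scheme at $\bar x$ is obtained as follows: - substitute $x_n=\bar x+\xi_n$ and $x_{n+1}=\bar x+\xi_{n+1}$; - keep the matrix $\delta(\bar x)$ (which depends only on $\bar x$ and $h_n$) fixed; - keep only terms up to first order in $\xi_n,\xi_{n+1}$. The scheme is locally exact at $\bar x$ if this linear relation is identical with the exact discretization above, as a relation determining $\xi_{n+1}$ from $\xi_n$. *)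

theory Defs
  imports "HOL-Analysis.Analysis"
begin

text \<open>Matrix powers and the matrix exponential for square matrices real^'n^'n
  (the library's exp is not available for this type, since the componentwise
  product on vec is not matrix multiplication).\<close>

fun mat_pow :: "real^'n^'n \<Rightarrow> nat \<Rightarrow> real^'n^'n" where
  "mat_pow A 0 = mat 1"
| "mat_pow A (Suc k) = A ** mat_pow A k"

definition mat_exp :: "real^'n^'n \<Rightarrow> real^'n^'n" where
  "mat_exp A = (\<Sum>k. (1 / fact k) *\<^sub>R mat_pow A k)"

end

theory Submission
  imports Defs
begin

lemma minv: assumes "invertible (A::real^'n^'n)"
  shows mir: "A ** matrix_inv A = mat 1" and mil: "matrix_inv A ** A = mat 1"
proof -
  have "\<exists>A'. A ** A' = mat 1 \<and> A' ** A = mat 1" using assms unfolding invertible_def .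
  hence "A ** matrix_inv A = mat 1 \<and> matrix_inv A ** A = mat 1" unfolding matrix_inv_def by (rule someI_ex)
  thus "A ** matrix_inv A = mat 1" "matrix_inv A ** A = mat 1" by auto
qed
lemma key:
  fixes A M P Q D :: "real^'n^'n" and F x y :: "real^'n"
  assumes iA: "invertible A" and iD: "invertible D" and AP: "A = P + Q" and DD: "D = A + Q ** M"
  shows "(y - x = (M ** matrix_inv D) *v (F + P *v x + Q *v y)) \<longleftrightarrow> y = (M + mat 1) *v x + (M ** matrix_inv A) *v F"
proof
  assume h: "y - x = (M ** matrix_inv D) *v (F + P *v x + Q *v y)"
  define w where "w = matrix_inv D *v (F + P *v x + Q *v y)"
  have yw: "y = x + M *v w" using h by (simp add: w_def matrix_vector_mul_assoc[symmetric] algebra_simps)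
  have "D *v w = F + P *v x + Q *v y" unfolding w_def
    by (simp add: matrix_vector_mul_assoc mir[OF iD] )
  hence "A *v w + Q *v (M *v w) = F + P *v x + Q *v x + Q *v (M *v w)"
    unfolding DD yw by (simp add: matrix_vector_mult_add_rdistrib matrix_vector_right_distrib matrix_vector_mul_assoc algebra_simps)
  hence "A *v w = F + A *v x" unfolding AP by (simp add: matrix_vector_mult_add_rdistrib algebra_simps)
  hence "matrix_inv A *v (A *v w) = matrix_inv A *v F + x"
    by (simp add: matrix_vector_right_distrib matrix_vector_mul_assoc mil[OF iA])
  hence "w = matrix_inv A *v F + x" by (simp add: matrix_vector_mul_assoc mil[OF iA])
  thus "y = (M + mat 1) *v x + (M ** matrix_inv A) *v F" using yw
    by (simp add: matrix_vector_mult_add_rdistrib matrix_vector_right_distrib matrix_vector_mul_assoc algebra_simps)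
next
  assume h: "y = (M + mat 1) *v x + (M ** matrix_inv A) *v F"
  define w where "w = x + matrix_inv A *v F"
  have yw: "y = x + M *v w" using h by (simp add: w_def matrix_vector_mult_add_rdistrib matrix_vector_right_distrib matrix_vector_mul_assoc algebra_simps)
  have Aw: "A *v w = A *v x + F" by (simp add: w_def matrix_vector_right_distrib matrix_vector_mul_assoc mir[OF iA])
  have "D *v w = F + P *v x + Q *v y"
    unfolding DD yw using Aw unfolding AP
    by (simp add: matrix_vector_mult_add_rdistrib matrix_vector_right_distrib matrix_vector_mul_assoc algebra_simps)
  hence "matrix_inv D *v (F + P *v x + Q *v y) = w"
    by (metis matrix_vector_mul_assoc mil[OF iD] matrix_vector_mul_lid)
  thus "y - x = (M ** matrix_inv D) *v (F + P *v x + Q *v y)" using yw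
    by (simp add: matrix_vector_mul_assoc[symmetric])
qed

theorem proposition4p3:
  fixes F :: "real^'n \<Rightarrow> real^'n"
    and DF :: "real^'n \<Rightarrow> real^'n^'n"
    and \<Psi> :: "real^'n \<Rightarrow> real^'n \<Rightarrow> real^'n"
    and \<Psi>1 \<Psi>2 :: "real^'n \<Rightarrow> real^'n \<Rightarrow> real^'n^'n"
    and xbar :: "real^'n"
    and h :: real
  assumes F_deriv: "\<And>x. (F has_derivative (\<lambda>v. DF x *v v)) (at x)"
    and \<Psi>_deriv: "\<And>x y. ((\<lambda>p. \<Psi> (fst p) (snd p)) has_derivative
                     (\<lambda>q. \<Psi>1 x y *v fst q + \<Psi>2 x y *v snd q)) (at (x, y))"
    and cons1: "\<And>x. \<Psi> x x = F x"
    and cons2: "\<And>x. DF x = \<Psi>1 x x + \<Psi>2 x x"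
    and inv_DF: "invertible (DF xbar)"
    and inv_den: "invertible (DF xbar + \<Psi>2 xbar xbar ** (mat_exp (h *\<^sub>R DF xbar) - mat 1))"
  shows "let A = DF xbar;
             E = mat_exp (h *\<^sub>R A);
             \<delta> = (E - mat 1) ** matrix_inv (A + \<Psi>2 xbar xbar ** (E - mat 1))
         in \<forall>\<xi> \<xi>'. (\<xi>' - \<xi> = \<delta> *v (\<Psi> xbar xbar + \<Psi>1 xbar xbar *v \<xi> + \<Psi>2 xbar xbar *v \<xi>'))
                   \<longleftrightarrow> \<xi>' = E *v \<xi> + ((E - mat 1) ** matrix_inv A) *v F xbar"
proof -
  define A where "A = DF xbar"
  define E where "E = mat_exp (h *\<^sub>R A)"
  have k: "\<And>x y. (y - x = ((E - mat 1) ** matrix_inv (A + \<Psi>2 xbar xbar ** (E - mat 1))) *v (F xbar + \<Psi>1 xbar xbar *v x + \<Psi>2 xbar xbar *v y))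
     \<longleftrightarrow> y = ((E - mat 1) + mat 1) *v x + ((E - mat 1) ** matrix_inv A) *v F xbar"
    by (rule key) (use inv_DF inv_den cons2 in \<open>auto simp: A_def E_def\<close>)
  show ?thesis unfolding Let_def A_def[symmetric] E_def[symmetric] cons1 using k by simp
qed

end
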